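(* There is an absolute constant $c>0$ such that the following holds. Let $d\geq 2$ and $n\geq 2$ be integers and let $G$ be an acyclic directed graph on $n$ vertices in which every vertex has outdegree at most $d$, and which contains a directed Hamilton path. Then $G$ contains an induced directed path on at least $c\,\frac{\log n}{\log d}$ vertices.
   Context: A directed path $x_1\to x_2\to\dots\to x_k$ in a directed graph $G$ is induced if the only arcs of $G$ between vertices of $\{x_1,\dots,x_k\}$ (in either direction) are the arcs $x_i\to x_{i+1}$, $1\le i<k$. A directed Hamilton path is a directed path visiting every vertex. Logarithms are natural logarithms. *)

theory Defs
  imports "HOL-Analysis.Analysis"
begin

definition digraph :: "'a set \<Rightarrow> ('a \<Rightarrow> 'a \<Rightarrow> bool) \<Rightarrow> bool" where
  "digraph V E \<longleftrightarrow> finite V \<and> (\<forall>u v. E u v \<longrightarrow> u \<in> V \<and> v \<in> V)"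

definition acyclic_dg :: "('a \<Rightarrow> 'a \<Rightarrow> bool) \<Rightarrow> bool" where
  "acyclic_dg E \<longleftrightarrow> (\<forall>v. \<not> (tranclp E) v v)"

definition outdeg :: "'a set \<Rightarrow> ('a \<Rightarrow> 'a \<Rightarrow> bool) \<Rightarrow> 'a \<Rightarrow> nat" where
  "outdeg V E v = card {w \<in> V. E v w}"

definition dpath :: "'a set \<Rightarrow> ('a \<Rightarrow> 'a \<Rightarrow> bool) \<Rightarrow> 'a list \<Rightarrow> bool" where
  "dpath V E xs \<longleftrightarrow> set xs \<subseteq> V \<and> distinct xs \<and>
     (\<forall>i. Suc i < length xs \<longrightarrow> E (xs ! i) (xs ! Suc i))"

definition hamilton_dpath :: "'a set \<Rightarrow> ('a \<Rightarrow> 'a \<Rightarrow> bool) \<Rightarrow> 'a list \<Rightarrow> bool" where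
  "hamilton_dpath V E xs \<longleftrightarrow> dpath V E xs \<and> set xs = V"

definition induced_dpath :: "'a set \<Rightarrow> ('a \<Rightarrow> 'a \<Rightarrow> bool) \<Rightarrow> 'a list \<Rightarrow> bool" where
  "induced_dpath V E xs \<longleftrightarrow> dpath V E xs \<and>
     (\<forall>i<length xs. \<forall>j<length xs. E (xs ! i) (xs ! j) \<longrightarrow> j = Suc i)"

end

theory Submission
  imports Defs
begin

definition walk :: "('a \<Rightarrow> 'a \<Rightarrow> bool) \<Rightarrow> 'a list \<Rightarrow> bool" where
  "walk E xs \<longleftrightarrow> (\<forall>i. Suc i < length xs \<longrightarrow> E (xs ! i) (xs ! Suc i))"

fun Wr :: "'a set \<Rightarrow> ('a \<Rightarrow> 'a \<Rightarrow> bool) \<Rightarrow> 'a \<Rightarrow> nat \<Rightarrow> 'a set" where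
  "Wr V E r 0 = {}"
| "Wr V E r (Suc k) = insert r (\<Union>u\<in>Wr V E r k. {w\<in>V. E u w})"

lemma Wr_mono1: "Wr V E r k \<subseteq> Wr V E r (Suc k)"
  by (induction k) auto

lemma Wr_mono: "k \<le> m \<Longrightarrow> Wr V E r k \<subseteq> Wr V E r m"
  apply (induction m rule: dec_induct)
   apply simp
  by (meson Wr_mono1 order_trans)

lemma Wr_sub: "r \<in> V \<Longrightarrow> Wr V E r k \<subseteq> V"
  by (induction k) auto

lemma Wr_card:
  assumes fin: "finite V" and r: "r \<in> V" and deg: "\<forall>v\<in>V. card {w\<in>V. E v w} \<le> d"
    and d: "d \<ge> 2"
  shows "finite (Wr V E r k) \<and> card (Wr V E r k) + 1 \<le> d ^ k"
proof (induction k)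
  case 0 then show ?case by simp
next
  case (Suc k)
  let ?W = "Wr V E r k"
  let ?U = "\<Union>u\<in>?W. {w\<in>V. E u w}"
  have sub: "?W \<subseteq> V" using Wr_sub[OF r] .
  have fU: "finite ?U" by (intro finite_UN_I) (use Suc.IH fin in auto)
  have "card ?U \<le> (\<Sum>u\<in>?W. card {w\<in>V. E u w})" by (rule card_UN_le) (use Suc in auto)
  also have "\<dots> \<le> (\<Sum>u\<in>?W. d)" by (rule sum_mono) (use deg sub in auto)
  also have "\<dots> = d * card ?W" by simp
  finally have cU: "card ?U \<le> d * card ?W" .
  have "card (Wr V E r (Suc k)) \<le> Suc (card ?U)" using fU by (simp add: card_insert_le_m1 card_insert_if)
  moreover have "d * card ?W + 2 \<le> d * (card ?W + 1)" using d by simp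
  moreover have "d * (card ?W + 1) \<le> d * d ^ k" using Suc by (intro mult_le_mono2) simp
  ultimately have "card (Wr V E r (Suc k)) + 1 \<le> d ^ Suc k" using cU by simp
  then show ?case using fU by simp
qed

lemma walk_W:
  assumes E: "\<forall>u v. E u v \<longrightarrow> u \<in> V \<and> v \<in> V" and w: "walk E xs" and x0: "xs ! 0 = r"
  shows "k < length xs \<Longrightarrow> xs ! k \<in> Wr V E r (Suc k)"
proof (induction k)
  case 0 then show ?case using x0 by simp
next
  case (Suc k)
  have e: "E (xs ! k) (xs ! Suc k)" using w Suc unfolding walk_def by blast
  then show ?case using Suc E by auto
qed

lemma W_walk:
  assumes E: "\<forall>u v. E u v \<longrightarrow> u \<in> V \<and> v \<in> V"
  shows "v \<in> Wr V E r k \<Longrightarrow> \<exists>xs. walk E xs \<and> xs \<noteq> [] \<and> xs ! 0 = r \<and> last xs = v \<and> length xs \<le> k"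
proof (induction k arbitrary: v)
  case 0 then show ?case by simp
next
  case (Suc k)
  show ?case
  proof (cases "v = r")
    case True
    then show ?thesis by (intro exI[of _ "[r]"]) (simp add: walk_def)
  next
    case False
    then obtain u where u: "u \<in> Wr V E r k" and e: "E u v" using Suc.prems by auto
    obtain xs where xs: "walk E xs" "xs \<noteq> []" "xs ! 0 = r" "last xs = u" "length xs \<le> k"
      using Suc.IH[OF u] by blast
    have "walk E (xs @ [v])" unfolding walk_def
    proof (intro allI impI)
      fix i assume i: "Suc i < length (xs @ [v])"
      show "E ((xs @ [v]) ! i) ((xs @ [v]) ! Suc i)"
      proof (cases "Suc i < length xs")
        case True then show ?thesis using xs(1) by (simp add: nth_append walk_def)
      next
        case False
        then have "i = length xs - 1" using i by simp
        then show ?thesis using xs e False by (simp add: nth_append last_conv_nth)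
      qed
    qed
    then show ?thesis using xs by (intro exI[of _ "xs @ [v]"]) (simp add: nth_append)
  qed
qed

lemma walk_trancl:
  assumes w: "walk E xs"
  shows "i < j \<Longrightarrow> j < length xs \<Longrightarrow> E\<^sup>+\<^sup>+ (xs ! i) (xs ! j)"
proof (induction j)
  case 0 then show ?case by simp
next
  case (Suc j)
  have e: "E (xs ! j) (xs ! Suc j)" using w Suc.prems unfolding walk_def by blast
  show ?case
  proof (cases "i = j")
    case True then show ?thesis using e by auto
  next
    case False
    then have "E\<^sup>+\<^sup>+ (xs ! i) (xs ! j)" using Suc by simp
    then show ?thesis using e by auto
  qed
qed

lemma shortest_induced:
  assumes E: "\<forall>u v. E u v \<longrightarrow> u \<in> V \<and> v \<in> V" and ac: "acyclic_dg E"
    and w: "walk E xs" and ne: "xs \<noteq> []" and x0: "xs ! 0 = r" and r: "r \<in> V"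
    and short: "\<forall>ys. walk E ys \<and> ys \<noteq> [] \<and> ys ! 0 = r \<and> last ys = last xs \<longrightarrow> length xs \<le> length ys"
  shows "induced_dpath V E xs"
proof -
  have setV: "set xs \<subseteq> V"
  proof
    fix x assume "x \<in> set xs"
    then obtain k where k: "k < length xs" "x = xs ! k" by (auto simp: in_set_conv_nth)
    show "x \<in> V"
    proof (cases k)
      case 0 then show ?thesis using k x0 r by simp
    next
      case (Suc m)
      then have "E (xs ! m) (xs ! k)" using w k unfolding walk_def by auto
      then show ?thesis using E k by auto
    qed
  qed
  have dist: "distinct xs"
    unfolding distinct_conv_nth
  proof (intro allI impI)
    fix i j assume ij: "i < length xs" "j < length xs" "i \<noteq> j"
    show "xs ! i \<noteq> xs ! j"
    proof
      assume eq: "xs ! i = xs ! j"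
      show False
      proof (cases "i < j")
        case True
        then have "E\<^sup>+\<^sup>+ (xs ! i) (xs ! j)" using walk_trancl[OF w] ij by blast
        then show False using eq ac unfolding acyclic_dg_def by auto
      next
        case False
        then have "j < i" using ij by simp
        then have "E\<^sup>+\<^sup>+ (xs ! j) (xs ! i)" using walk_trancl[OF w] ij by blast
        then show False using eq ac unfolding acyclic_dg_def by auto
      qed
    qed
  qed
  have chord: "\<forall>i<length xs. \<forall>j<length xs. E (xs ! i) (xs ! j) \<longrightarrow> j = Suc i"
  proof (intro allI impI)
    fix i j assume i: "i < length xs" and j: "j < length xs" and e: "E (xs ! i) (xs ! j)"
    show "j = Suc i"
    proof (rule ccontr)
      assume nj: "j \<noteq> Suc i"
      consider "j = i" | "j < i" | "Suc i < j" using nj by linarith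
      then show False
      proof cases
        case 1 then show False using e ac unfolding acyclic_dg_def by auto
      next
        case 2
        then have "E\<^sup>+\<^sup>+ (xs ! j) (xs ! i)" using walk_trancl[OF w] i by blast
        then have "E\<^sup>+\<^sup>+ (xs ! j) (xs ! j)" using e by auto
        then show False using ac unfolding acyclic_dg_def by auto
      next
        case 3
        define ys where "ys = take (Suc i) xs @ drop j xs"
        have ly: "length ys = Suc i + (length xs - j)" using i j by (simp add: ys_def)
        have nth1: "k < Suc i \<Longrightarrow> ys ! k = xs ! k" for k using i by (simp add: ys_def nth_append)
        have nth2: "Suc i \<le> k \<Longrightarrow> k < length ys \<Longrightarrow> ys ! k = xs ! (j + (k - Suc i))" for k
          using i j ly by (simp add: ys_def nth_append)
        have wy: "walk E ys" unfolding walk_def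
        proof (intro allI impI)
          fix k assume k: "Suc k < length ys"
          consider "Suc k < Suc i" | "k = i" | "Suc i \<le> k" by linarith
          then show "E (ys ! k) (ys ! Suc k)"
          proof cases
            case 1
            then have "Suc k < length xs" using i by simp
            then show ?thesis using 1 nth1[of k] nth1[of "Suc k"] w unfolding walk_def by simp
          next
            case 2
            then show ?thesis using nth1[of k] nth2[of "Suc k"] k e by simp
          next
            case 3
            have a: "ys ! k = xs ! (j + (k - Suc i))" using nth2[of k] 3 k by simp
            have b0: "ys ! Suc k = xs ! (j + (Suc k - Suc i))" using nth2[of "Suc k"] 3 k by simp
            have b1: "j + (Suc k - Suc i) = Suc (j + (k - Suc i))" using 3 by simp
            have b: "ys ! Suc k = xs ! Suc (j + (k - Suc i))" using b0 b1 by (simp only:)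
            have c: "Suc (j + (k - Suc i)) < length xs" using k ly 3 by simp
            show ?thesis using a b c w unfolding walk_def by simp
          qed
        qed
        have "0 < length ys" using ly by simp
        then have "ys \<noteq> []" by simp
        moreover have "ys ! 0 = r" using nth1[of 0] x0 by simp
        moreover have "last ys = last xs" using j by (simp add: ys_def)
        ultimately have "length xs \<le> length ys" using short wy by blast
        then show False using ly 3 j by simp
      qed
    qed
  qed
  show ?thesis unfolding induced_dpath_def dpath_def
    using setV dist chord w unfolding walk_def by blast
qed

theorem mainTheorem5:
  "\<exists>c::real. c > 0 \<and>
     (\<forall>(V::nat set) E (d::nat) (n::nat).
        digraph V E \<longrightarrow> card V = n \<longrightarrow> d \<ge> 2 \<longrightarrow> n \<ge> 2 \<longrightarrow>
        acyclic_dg E \<longrightarrow> (\<forall>v\<in>V. outdeg V E v \<le> d) \<longrightarrow>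
        (\<exists>xs. hamilton_dpath V E xs) \<longrightarrow>
        (\<exists>xs. induced_dpath V E xs \<and> real (length xs) \<ge> c * ln (real n) / ln (real d)))"
proof (intro exI[of _ 1] conjI allI impI)
  show "(0::real) < 1" by simp
  fix V :: "nat set" and E d n
  assume dg: "digraph V E" and cV: "card V = n" and d: "d \<ge> 2" and n: "n \<ge> 2"
    and ac: "acyclic_dg E" and deg: "\<forall>v\<in>V. outdeg V E v \<le> d"
    and "\<exists>xs. hamilton_dpath V E xs"
  then obtain h where h: "hamilton_dpath V E h" by blast
  have fin: "finite V" using dg unfolding digraph_def by blast
  have E: "\<forall>u v. E u v \<longrightarrow> u \<in> V \<and> v \<in> V" using dg unfolding digraph_def by blast
  have hw: "walk E h" using h unfolding hamilton_dpath_def dpath_def walk_def by blast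
  have hd: "distinct h" using h unfolding hamilton_dpath_def dpath_def by blast
  have hs: "set h = V" using h unfolding hamilton_dpath_def by blast
  have lh: "length h = n" using distinct_card[OF hd] hs cV by simp
  define r where "r = h ! 0"
  have r: "r \<in> V" using nth_mem[of 0 h] lh n hs unfolding r_def by auto
  have deg': "\<forall>v\<in>V. card {w\<in>V. E v w} \<le> d" using deg unfolding outdeg_def by simp
  have VW: "V \<subseteq> Wr V E r n"
  proof
    fix v assume "v \<in> V"
    then have "v \<in> set h" using hs by simp
    then obtain k where k: "k < length h" "h ! k = v" by (meson in_set_conv_nth)
    have 1: "h ! k \<in> Wr V E r (Suc k)" by (rule walk_W[OF E hw r_def[symmetric] k(1)])
    have 2: "Wr V E r (Suc k) \<subseteq> Wr V E r n" by (rule Wr_mono) (use k lh in simp)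
    show "v \<in> Wr V E r n" using 1 2 k(2) by blast
  qed
  define K where "K = (LEAST K. V \<subseteq> Wr V E r K)"
  have VK: "V \<subseteq> Wr V E r K" unfolding K_def by (rule LeastI[of _ n]) (rule VW)
  have K0: "K \<noteq> 0"
  proof
    assume "K = 0"
    then have "Wr V E r K = {}" by simp
    then show False using VK r by blast
  qed
  have "\<not> V \<subseteq> Wr V E r (K - 1)"
  proof
    assume "V \<subseteq> Wr V E r (K - 1)"
    then have "K \<le> K - 1" unfolding K_def by (rule Least_le)
    then show False using K0 by simp
  qed
  then obtain v where v: "v \<in> V" "v \<notin> Wr V E r (K - 1)" by blast
  obtain xs where xs: "walk E xs" "xs \<noteq> []" "xs ! 0 = r" "last xs = v" "length xs \<le> K"
    using W_walk[OF E] VK v by blast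
  have short: "\<forall>ys. walk E ys \<and> ys \<noteq> [] \<and> ys ! 0 = r \<and> last ys = last xs \<longrightarrow> K \<le> length ys"
  proof (intro allI impI)
    fix ys assume ys: "walk E ys \<and> ys \<noteq> [] \<and> ys ! 0 = r \<and> last ys = last xs"
    show "K \<le> length ys"
    proof (rule ccontr)
      assume "\<not> K \<le> length ys"
      then have lt: "length ys \<le> K - 1" by simp
      have l0: "length ys - 1 < length ys" using ys by simp
      have "ys ! (length ys - 1) \<in> Wr V E r (Suc (length ys - 1))"
        using walk_W[OF E _ _ l0] ys by blast
      moreover have "ys ! (length ys - 1) = v" using ys xs(4) by (metis last_conv_nth)
      moreover have "Suc (length ys - 1) = length ys" using l0 by linarith
      ultimately have "v \<in> Wr V E r (length ys)" by (simp only:)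
      then show False using Wr_mono[OF lt, of V E r] v(2) by blast
    qed
  qed
  have "K \<le> length xs" using short xs by blast
  then have lx: "length xs = K" using xs(5) by simp
  have ind: "induced_dpath V E xs"
    by (rule shortest_induced[OF E ac xs(1) xs(2) xs(3) r]) (use short lx in simp)
  have cw: "card (Wr V E r K) + 1 \<le> d ^ K" using Wr_card[OF fin r deg' d] by blast
  have fW: "finite (Wr V E r K)" using Wr_card[OF fin r deg' d] by blast
  have "n \<le> card (Wr V E r K)" using card_mono[OF fW VK] cV by simp
  then have "n < d ^ K" using cw by simp
  then have "real n < real d ^ K" by (metis of_nat_less_iff of_nat_power)
  then have "ln (real n) < ln (real d ^ K)" using n d by (intro ln_less_cancel_iff[THEN iffD2]) auto
  also have "\<dots> = real K * ln (real d)" using d by (simp add: ln_realpow)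
  finally have "ln (real n) < real K * ln (real d)" .
  moreover have "ln (real d) > 0" using d by simp
  ultimately have "ln (real n) / ln (real d) \<le> real K" by (simp add: divide_le_eq)
  then show "\<exists>xs. induced_dpath V E xs \<and> real (length xs) \<ge> 1 * ln (real n) / ln (real d)"
    using ind lx by auto
qed

end
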